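(* Let $R=k[t,t^{-1}]$ and $\mathcal R=(R,d/dt)$, and let $\mathcal A_1,\mathcal A_2$ be $\mathcal R$-conformal superalgebras such that the canonical maps $R\to\mathrm{Ctd}_k(\mathcal A_i)$, $r\mapsto r_{\mathcal A_i}$, are $k$-algebra isomorphisms for $i=1,2$. Then $\mathcal A_1\cong\mathcal A_2$ as $k$-conformal superalgebras if and only if $\mathcal A_1\cong\mathcal A_2$ as $\mathcal R$-conformal superalgebras.
   Context: Let $k$ be a field of characteristic $0$. An $\mathcal R$-conformal superalgebra (for $\mathcal R=(R,\delta_R)$, $R$ a commutative unital $k$-algebra with $k$-linear derivation $\delta_R$) is a $\mathbb Z/2\mathbb Z$-graded $R$-module $\mathcal A$ with parity-preserving $k$-linear $\partial_{\mathcal A}$ and $k$-bilinear products $a_{(n)}b$ ($n\in\mathbb Z_+$) satisfying: $a_{(n)}b=0$ for $n\gg0$; $(\partial_{\mathcal A}a)_{(n)}b=-na_{(n-1)}b$, $a_{(n)}\partial_{\mathcal A}b=\partial_{\mathcal A}(a_{(n)}b)+na_{(n-1)}b$; $\partial_{\mathcal A}(ra)=r\partial_{\mathcal A}a+\delta_R(r)a$; $a_{(n)}(rb)=r(a_{(n)}b)$, $(ra)_{(n)}b=\sum_j\frac1{j!}\delta_R^j(r)(a_{(n+j)}b)$. Homomorphisms: even $R$-linear maps preserving $n$-products and commuting with $\partial$. $k$-conformal means over $(k,0)$; restriction of scalars makes $\mathcal R$-conformal superalgebras $k$-conformal. $\mathrm{Ctd}_k(\mathcal A)$ is the set of even $k$-linear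 endomorphisms $\chi$ with $\chi(a_{(n)}b)=a_{(n)}\chi(b)$ for all $a,b,n$; $r_{\mathcal A}$ is $a\mapsto ra$. *)

theory Defs
  imports Main "HOL-Computational_Algebra.Formal_Laurent_Series"
begin

text \<open>The ring R = k[t,t^-1] of Laurent polynomials, realised inside the formal
Laurent series: the series with finitely many nonzero coefficients.  The field k is realised as the constant series.\<close>

definition laurent_polys :: "'k::field fls set" where
  "laurent_polys = {f. finite {n. fls_nth f n \<noteq> 0}}"

definition const_scalars :: "'k::field fls set" where
  "const_scalars = range fls_const"

record ('r, 'a) cstruct =
  smul  :: "'r \<Rightarrow> 'a \<Rightarrow> 'a"
  evp   :: "'a set"
  odp   :: "'a set"
  der   :: "'a \<Rightarrow> 'a"
  nprod :: "nat \<Rightarrow> 'a \<Rightarrow> 'a \<Rightarrow> 'a"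

definition submodule_of :: "'k::field fls set \<Rightarrow> ('k fls \<Rightarrow> 'a \<Rightarrow> 'a) \<Rightarrow> 'a::ab_group_add set \<Rightarrow> bool" where
  "submodule_of S sm V \<longleftrightarrow> 0 \<in> V \<and> (\<forall>x\<in>V. \<forall>y\<in>V. x + y \<in> V) \<and> (\<forall>x\<in>V. - x \<in> V)
     \<and> (\<forall>r\<in>S. \<forall>x\<in>V. sm r x \<in> V)"

text \<open>An (S,\<delta>)-conformal superalgebra, where S is a commutative subring of the
Laurent series (S = laurent_polys with \<delta> = fls_deriv gives R-conformal
superalgebras; S = const_scalars with \<delta> = 0 gives k-conformal ones).
k-linearity means linearity w.r.t. the constant scalars fls_const c.\<close>

definition conformal_superalgebra ::
  "'k::field_char_0 fls set \<Rightarrow> ('k fls \<Rightarrow> 'k fls) \<Rightarrow> ('k fls, 'a::ab_group_add) cstruct \<Rightarrow> bool" where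
  "conformal_superalgebra S \<delta> A \<longleftrightarrow>
     \<comment> \<open>S-module\<close>
     (\<forall>r\<in>S. \<forall>a b. smul A r (a + b) = smul A r a + smul A r b) \<and>
     (\<forall>r\<in>S. \<forall>s\<in>S. \<forall>a. smul A (r + s) a = smul A r a + smul A s a) \<and>
     (\<forall>r\<in>S. \<forall>s\<in>S. \<forall>a. smul A (r * s) a = smul A r (smul A s a)) \<and>
     (\<forall>a. smul A 1 a = a) \<and>
     \<comment> \<open>Z/2Z-grading as a direct sum of submodules\<close>
     submodule_of S (smul A) (evp A) \<and> submodule_of S (smul A) (odp A) \<and>
     evp A \<inter> odp A = {0} \<and> (\<forall>a. \<exists>x\<in>evp A. \<exists>y\<in>odp A. a = x + y) \<and>
     \<comment> \<open>\<partial> parity preserving and k-linear\<close>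
     der A ` evp A \<subseteq> evp A \<and> der A ` odp A \<subseteq> odp A \<and>
     (\<forall>a b. der A (a + b) = der A a + der A b) \<and>
     (\<forall>c a. der A (smul A (fls_const c) a) = smul A (fls_const c) (der A a)) \<and>
     \<comment> \<open>n-products k-bilinear\<close>
     (\<forall>n a b c. nprod A n (a + b) c = nprod A n a c + nprod A n b c) \<and>
     (\<forall>n a b c. nprod A n a (b + c) = nprod A n a b + nprod A n a c) \<and>
     (\<forall>n x a b. nprod A n (smul A (fls_const x) a) b = smul A (fls_const x) (nprod A n a b)) \<and>
     (\<forall>n x a b. nprod A n a (smul A (fls_const x) b) = smul A (fls_const x) (nprod A n a b)) \<and>
     \<comment> \<open>locality\<close>
     (\<forall>a b. \<exists>N. \<forall>n\<ge>N. nprod A n a b = 0) \<and>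
     \<comment> \<open>(\<partial>a)_(n) b = - n a_(n-1) b   and   a_(n) \<partial>b = \<partial>(a_(n) b) + n a_(n-1) b
         (for n = 0 the terms with the factor n vanish)\<close>
     (\<forall>n a b. nprod A n (der A a) b = - smul A (of_nat n) (nprod A (n - 1) a b)) \<and>
     (\<forall>n a b. nprod A n a (der A b) = der A (nprod A n a b) + smul A (of_nat n) (nprod A (n - 1) a b)) \<and>
     \<comment> \<open>\<partial>(ra) = r \<partial>a + \<delta>(r) a\<close>
     (\<forall>r\<in>S. \<forall>a. der A (smul A r a) = smul A r (der A a) + smul A (\<delta> r) a) \<and>
     \<comment> \<open>a_(n)(rb) = r (a_(n) b)\<close>
     (\<forall>r\<in>S. \<forall>n a b. nprod A n a (smul A r b) = smul A r (nprod A n a b)) \<and>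
     \<comment> \<open>(ra)_(n) b = \<Sum>_j (1/j!) \<delta>^j(r) (a_(n+j) b), a finite sum by locality\<close>
     (\<forall>r\<in>S. \<forall>n a b N. (\<forall>m\<ge>N. nprod A m a b = 0) \<longrightarrow>
        nprod A n (smul A r a) b =
          (\<Sum>j<N. smul A (fls_const (1 / fact j) * (\<delta> ^^ j) r) (nprod A (n + j) a b)))"

definition conformal_hom ::
  "'k::field_char_0 fls set \<Rightarrow> ('k fls, 'a::ab_group_add) cstruct \<Rightarrow> ('k fls, 'b::ab_group_add) cstruct
     \<Rightarrow> ('a \<Rightarrow> 'b) \<Rightarrow> bool" where
  "conformal_hom S A B f \<longleftrightarrow>
     (\<forall>a b. f (a + b) = f a + f b) \<and>
     (\<forall>r\<in>S. \<forall>a. f (smul A r a) = smul B r (f a)) \<and>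
     f ` evp A \<subseteq> evp B \<and> f ` odp A \<subseteq> odp B \<and>
     (\<forall>n a b. f (nprod A n a b) = nprod B n (f a) (f b)) \<and>
     (\<forall>a. f (der A a) = der B (f a))"

definition conformal_iso ::
  "'k::field_char_0 fls set \<Rightarrow> ('k fls, 'a::ab_group_add) cstruct \<Rightarrow> ('k fls, 'b::ab_group_add) cstruct
     \<Rightarrow> ('a \<Rightarrow> 'b) \<Rightarrow> bool" where
  "conformal_iso S A B f \<longleftrightarrow> conformal_hom S A B f \<and> bij f"

definition conformal_isomorphic ::
  "'k::field_char_0 fls set \<Rightarrow> ('k fls, 'a::ab_group_add) cstruct \<Rightarrow> ('k fls, 'b::ab_group_add) cstruct \<Rightarrow> bool" where
  "conformal_isomorphic S A B \<longleftrightarrow> (\<exists>f. conformal_iso S A B f)"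

definition Ctd_k :: "('k::field_char_0 fls, 'a::ab_group_add) cstruct \<Rightarrow> ('a \<Rightarrow> 'a) set" where
  "Ctd_k A = {\<chi>. (\<forall>a b. \<chi> (a + b) = \<chi> a + \<chi> b) \<and>
                 (\<forall>c a. \<chi> (smul A (fls_const c) a) = smul A (fls_const c) (\<chi> a)) \<and>
                 \<chi> ` evp A \<subseteq> evp A \<and> \<chi> ` odp A \<subseteq> odp A \<and>
                 (\<forall>n a b. \<chi> (nprod A n a b) = nprod A n a (\<chi> b))}"

definition canonical_map_is_iso :: "('k::field_char_0 fls, 'a::ab_group_add) cstruct \<Rightarrow> bool" where
  "canonical_map_is_iso A \<longleftrightarrow>
     bij_betw (\<lambda>r. smul A r) laurent_polys (Ctd_k A) \<and>
     smul A 1 = id \<and>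
     (\<forall>r\<in>laurent_polys. \<forall>s\<in>laurent_polys. smul A (r * s) = smul A r \<circ> smul A s) \<and>
     (\<forall>r\<in>laurent_polys. \<forall>s\<in>laurent_polys. smul A (r + s) = (\<lambda>a. smul A r a + smul A s a)) \<and>
     (\<forall>c. \<forall>r\<in>laurent_polys. smul A (fls_const c * r) = smul A (fls_const c) \<circ> smul A r)"

end

theory Submission
  imports Defs
begin
unbundle fps_syntax


lemma lp_const: "fls_const c \<in> laurent_polys"
  unfolding laurent_polys_def by (auto intro: finite_subset[of _ "{0}"])

lemma lp_X: "fls_X \<in> laurent_polys"
  unfolding laurent_polys_def by (auto intro: finite_subset[of _ "{1}"])

lemma lp_X_inv: "fls_X_inv \<in> laurent_polys"
  unfolding laurent_polys_def by (auto intro: finite_subset[of _ "{-1}"])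

lemma lp_one: "1 \<in> laurent_polys"
  using lp_const[of 1] by simp

lemma lp_deriv:
  fixes r :: "'k::field_char_0 fls"
  assumes "r \<in> laurent_polys" shows "fls_deriv r \<in> laurent_polys"
proof -
  have "{n. fls_deriv r $$ n \<noteq> 0} \<subseteq> (\<lambda>n. n - 1) ` {n. r $$ n \<noteq> 0}"
  proof
    fix n assume "n \<in> {n. fls_deriv r $$ n \<noteq> 0}"
    hence "r $$ (n+1) \<noteq> 0" by auto
    thus "n \<in> (\<lambda>n. n - 1) ` {n. r $$ n \<noteq> 0}" by (intro image_eqI[of _ _ "n+1"]) auto
  qed
  thus ?thesis using assms unfolding laurent_polys_def by (auto intro: finite_subset)
qed

lemma lp_mult:
  fixes r s :: "'k::field fls"
  assumes "r \<in> laurent_polys" "s \<in> laurent_polys" shows "r * s \<in> laurent_polys"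
proof -
  have "{n. (r*s) $$ n \<noteq> 0} \<subseteq> (\<lambda>(i,j). i + j) ` ({n. r $$ n \<noteq> 0} \<times> {n. s $$ n \<noteq> 0})"
  proof
    fix n assume "n \<in> {n. (r*s) $$ n \<noteq> 0}"
    hence "(\<Sum>i=fls_subdegree r..n - fls_subdegree s. r $$ i * s $$ (n - i)) \<noteq> 0"
      by (simp add: fls_times_nth(2))
    then obtain i where "r $$ i * s $$ (n - i) \<noteq> 0" by (meson sum.not_neutral_contains_not_neutral)
    thus "n \<in> (\<lambda>(i,j). i + j) ` ({n. r $$ n \<noteq> 0} \<times> {n. s $$ n \<noteq> 0})"
      by (intro image_eqI[of _ _ "(i, n - i)"]) auto
  qed
  thus ?thesis using assms unfolding laurent_polys_def by (auto intro: finite_subset)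
qed

lemma deriv_zero_const:
  fixes g :: "'k::field_char_0 fls"
  assumes "fls_deriv g = 0" shows "g = fls_const (g $$ 0)"
proof (rule fls_eqI)
  fix n show "g $$ n = fls_const (g $$ 0) $$ n"
  proof (cases "n = 0")
    case False
    have "fls_deriv g $$ (n - 1) = 0" using assms by simp
    thus ?thesis using False by simp
  qed simp
qed

lemma X_plus_const_unit:
  fixes c :: "'k::field"
  assumes "(fls_X + fls_const c) * h = 1" "h \<in> laurent_polys"
  shows "c = 0"
proof (rule ccontr)
  assume c: "c \<noteq> 0"
  have coef: "\<And>n. ((fls_X + fls_const c) * h) $$ n = h $$ (n - 1) + c * h $$ n"
    by (simp add: distrib_right fls_X_times_conv_shift)
  let ?S = "{n. h $$ n \<noteq> 0}"
  have fin: "finite ?S" using assms(2) unfolding laurent_polys_def by simp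
  have "h \<noteq> 0" using assms(1) by auto
  then obtain k where "h $$ k \<noteq> 0" using fls_nonzero_nth by blast
  hence ne: "?S \<noteq> {}" by auto
  define M where "M = Max ?S"
  define m where "m = Min ?S"
  have M: "h $$ M \<noteq> 0" "\<And>n. h $$ n \<noteq> 0 \<Longrightarrow> n \<le> M" using fin ne Max_in Max_ge unfolding M_def by auto
  have m: "h $$ m \<noteq> 0" "\<And>n. h $$ n \<noteq> 0 \<Longrightarrow> m \<le> n" using fin ne Min_in Min_le unfolding m_def by auto
  have "h $$ (M+1) = 0" using M(2)[of "M+1"] by auto
  hence "((fls_X + fls_const c) * h) $$ (M+1) \<noteq> 0" using coef[of "M+1"] M(1) by simp
  hence "M + 1 = 0" using assms(1) by (auto split: if_splits)
  have "h $$ (m - 1) = 0" using m(2)[of "m-1"] by auto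
  hence "((fls_X + fls_const c) * h) $$ m \<noteq> 0" using coef[of m] m(1) c by simp
  hence "m = 0" using assms(1) by (auto split: if_splits)
  have "m \<le> M" using m(1) M(2) by auto
  thus False using \<open>M+1 = 0\<close> \<open>m = 0\<close> by simp
qed

lemma X_inv_unique:
  fixes h :: "'k::field fls"
  assumes "fls_X * h = 1" shows "h = fls_X_inv"
proof (rule fls_eqI)
  fix n
  have "(fls_X * h) $$ (n+1) = h $$ n" by (simp add: fls_X_times_conv_shift)
  thus "h $$ n = fls_X_inv $$ n" using assms by (cases "n = -1") (auto split: if_splits)
qed

definition mono :: "int \<Rightarrow> 'k::field fls" where
  "mono n = (if n \<ge> 0 then fls_X ^ nat n else fls_X_inv ^ nat (-n))"

lemma mono_nth: "mono n $$ k = (if k = n then 1 else 0)"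
  unfolding mono_def by auto

lemma lp_repr:
  fixes r :: "'k::field fls"
  assumes "r \<in> laurent_polys"
  shows "r = (\<Sum>n\<in>{n. r $$ n \<noteq> 0}. fls_const (r $$ n) * mono n)"
proof (rule fls_eqI)
  fix k
  have fin: "finite {n. r $$ n \<noteq> 0}" using assms unfolding laurent_polys_def by simp
  have "(\<Sum>n\<in>{n. r $$ n \<noteq> 0}. fls_const (r $$ n) * mono n) $$ k
      = (\<Sum>n\<in>{n. r $$ n \<noteq> 0}. (if k = n then r $$ n else 0))"
    by (simp add: fls_nth_sum mono_nth if_distrib cong: if_cong)
  also have "\<dots> = r $$ k" using fin by (simp add: sum.delta)
  finally show "r $$ k = (\<Sum>n\<in>{n. r $$ n \<noteq> 0}. fls_const (r $$ n) * mono n) $$ k" by simp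
qed


lemma lp_add:
  fixes r s :: "'k::field fls"
  assumes "r \<in> laurent_polys" "s \<in> laurent_polys" shows "r + s \<in> laurent_polys"
proof -
  have "{n. (r+s) $$ n \<noteq> 0} \<subseteq> {n. r $$ n \<noteq> 0} \<union> {n. s $$ n \<noteq> 0}" by auto
  thus ?thesis using assms unfolding laurent_polys_def by (auto intro: finite_subset)
qed

lemma lp_mono: "(mono n :: 'k::field fls) \<in> laurent_polys"
proof -
  have "{k. (mono n :: 'k fls) $$ k \<noteq> 0} \<subseteq> {n}" by (auto simp: mono_nth)
  thus ?thesis unfolding laurent_polys_def by (auto intro: finite_subset)
qed

theorem corollary3p27:
  fixes A1 :: "('k::field_char_0 fls, 'a::ab_group_add) cstruct"
    and A2 :: "('k fls, 'b::ab_group_add) cstruct"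
  assumes "conformal_superalgebra laurent_polys fls_deriv A1"
    and "conformal_superalgebra laurent_polys fls_deriv A2"
    and "canonical_map_is_iso A1"
    and "canonical_map_is_iso A2"
  shows "conformal_isomorphic const_scalars A1 A2 \<longleftrightarrow> conformal_isomorphic laurent_polys A1 A2"
proof
  assume "conformal_isomorphic laurent_polys A1 A2"
  then obtain f where "conformal_iso laurent_polys A1 A2 f" unfolding conformal_isomorphic_def by blast
  hence "conformal_iso const_scalars A1 A2 f"
    unfolding conformal_iso_def conformal_hom_def const_scalars_def using lp_const by blast
  thus "conformal_isomorphic const_scalars A1 A2" unfolding conformal_isomorphic_def by blast
next
  let ?R = "laurent_polys :: 'k fls set"
  assume "conformal_isomorphic const_scalars A1 A2"
  then obtain f where hom: "conformal_hom const_scalars A1 A2 f" and bij: "bij f"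
    unfolding conformal_isomorphic_def conformal_iso_def by blast
  have fadd: "\<And>a b. f (a + b) = f a + f b" using hom unfolding conformal_hom_def by blast
  have fc: "\<And>c a. f (smul A1 (fls_const c) a) = smul A2 (fls_const c) (f a)"
    using hom unfolding conformal_hom_def const_scalars_def by blast
  have fev: "f ` evp A1 \<subseteq> evp A2" and fod: "f ` odp A1 \<subseteq> odp A2"
    using hom unfolding conformal_hom_def by blast+
  have fnp: "\<And>n a b. f (nprod A1 n a b) = nprod A2 n (f a) (f b)" using hom unfolding conformal_hom_def by blast
  have fder: "\<And>a. f (der A1 a) = der A2 (f a)" using hom unfolding conformal_hom_def by blast
  have f0: "f 0 = 0" using fadd[of 0 0] by simp
  have finj: "\<And>x y. f x = f y \<Longrightarrow> x = y" using bij by (meson bij_def injD)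
  define g where "g = inv f"
  have fg: "\<And>y. f (g y) = y" unfolding g_def using bij by (simp add: bij_is_surj surj_f_inv_f)
  have gf: "\<And>x. g (f x) = x" unfolding g_def using bij by (simp add: bij_is_inj)
  have gadd: "\<And>a b. g (a + b) = g a + g b" by (rule finj) (simp add: fg fadd)
  have gc: "\<And>c a. g (smul A2 (fls_const c) a) = smul A1 (fls_const c) (g a)" by (rule finj) (simp add: fg fc)
  have gnp: "\<And>n a b. g (nprod A2 n a b) = nprod A1 n (g a) (g b)" by (rule finj) (simp add: fg fnp)
  note C1 = assms(1)[unfolded conformal_superalgebra_def]
  note C2 = assms(2)[unfolded conformal_superalgebra_def]
  have s1add: "\<And>r a b. r \<in> ?R \<Longrightarrow> smul A1 r (a + b) = smul A1 r a + smul A1 r b"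
    by (rule C1[THEN conjunct1, rule_format])
  have s2add: "\<And>r a b. r \<in> ?R \<Longrightarrow> smul A2 r (a + b) = smul A2 r a + smul A2 r b"
    by (rule C2[THEN conjunct1, rule_format])
  have s1radd: "\<And>r s a. r \<in> ?R \<Longrightarrow> s \<in> ?R \<Longrightarrow> smul A1 (r + s) a = smul A1 r a + smul A1 s a"
    by (rule C1[THEN conjunct2, THEN conjunct1, rule_format])
  have s2radd: "\<And>r s a. r \<in> ?R \<Longrightarrow> s \<in> ?R \<Longrightarrow> smul A2 (r + s) a = smul A2 r a + smul A2 s a"
    by (rule C2[THEN conjunct2, THEN conjunct1, rule_format])
  have s1mul: "\<And>r s a. r \<in> ?R \<Longrightarrow> s \<in> ?R \<Longrightarrow> smul A1 (r * s) a = smul A1 r (smul A1 s a)"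
    by (rule C1[THEN conjunct2, THEN conjunct2, THEN conjunct1, rule_format])
  have s2mul: "\<And>r s a. r \<in> ?R \<Longrightarrow> s \<in> ?R \<Longrightarrow> smul A2 (r * s) a = smul A2 r (smul A2 s a)"
    by (rule C2[THEN conjunct2, THEN conjunct2, THEN conjunct1, rule_format])
  have s11: "\<And>a. smul A1 1 a = a" by (rule C1[THEN conjunct2, THEN conjunct2, THEN conjunct2, THEN conjunct1, rule_format])
  have s21: "\<And>a. smul A2 1 a = a" by (rule C2[THEN conjunct2, THEN conjunct2, THEN conjunct2, THEN conjunct1, rule_format])
  have sub2e: "submodule_of ?R (smul A2) (evp A2)"
    by (rule C2[THEN conjunct2, THEN conjunct2, THEN conjunct2, THEN conjunct2, THEN conjunct1, rule_format])
  have sub2o: "submodule_of ?R (smul A2) (odp A2)"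
    by (rule C2[THEN conjunct2, THEN conjunct2, THEN conjunct2, THEN conjunct2, THEN conjunct2, THEN conjunct1, rule_format])
  have int2: "evp A2 \<inter> odp A2 = {0}"
    by (rule C2[THEN conjunct2, THEN conjunct2, THEN conjunct2, THEN conjunct2, THEN conjunct2, THEN conjunct2, THEN conjunct1, rule_format])
  have dec1: "\<And>a. \<exists>x\<in>evp A1. \<exists>y\<in>odp A1. a = x + y"
    by (rule C1[THEN conjunct2, THEN conjunct2, THEN conjunct2, THEN conjunct2, THEN conjunct2, THEN conjunct2, THEN conjunct2, THEN conjunct1, rule_format])
  have d1: "\<And>r a. r \<in> ?R \<Longrightarrow> der A1 (smul A1 r a) = smul A1 r (der A1 a) + smul A1 (fls_deriv r) a"
    by (rule C1[THEN conjunct2, THEN conjunct2, THEN conjunct2, THEN conjunct2, THEN conjunct2, THEN conjunct2, THEN conjunct2, THEN conjunct2, THEN conjunct2, THEN conjunct2, THEN conjunct2, THEN conjunct2, THEN conjunct2, THEN conjunct2, THEN conjunct2, THEN conjunct2, THEN conjunct2, THEN conjunct2, THEN conjunct2, THEN conjunct1, rule_format])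
  have d2: "\<And>r a. r \<in> ?R \<Longrightarrow> der A2 (smul A2 r a) = smul A2 r (der A2 a) + smul A2 (fls_deriv r) a"
    by (rule C2[THEN conjunct2, THEN conjunct2, THEN conjunct2, THEN conjunct2, THEN conjunct2, THEN conjunct2, THEN conjunct2, THEN conjunct2, THEN conjunct2, THEN conjunct2, THEN conjunct2, THEN conjunct2, THEN conjunct2, THEN conjunct2, THEN conjunct2, THEN conjunct2, THEN conjunct2, THEN conjunct2, THEN conjunct2, THEN conjunct1, rule_format])
  have n2: "\<And>r n a b. r \<in> ?R \<Longrightarrow> nprod A2 n a (smul A2 r b) = smul A2 r (nprod A2 n a b)"
    by (rule C2[THEN conjunct2, THEN conjunct2, THEN conjunct2, THEN conjunct2, THEN conjunct2, THEN conjunct2, THEN conjunct2, THEN conjunct2, THEN conjunct2, THEN conjunct2, THEN conjunct2, THEN conjunct2, THEN conjunct2, THEN conjunct2, THEN conjunct2, THEN conjunct2, THEN conjunct2, THEN conjunct2, THEN conjunct2, THEN conjunct2, THEN conjunct1, rule_format])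
  have bij1: "bij_betw (\<lambda>r. smul A1 r) ?R (Ctd_k A1)" using assms(3) unfolding canonical_map_is_iso_def by blast
  have sinj: "\<And>r s. r \<in> ?R \<Longrightarrow> s \<in> ?R \<Longrightarrow> (\<And>a. smul A1 r a = smul A1 s a) \<Longrightarrow> r = s"
  proof -
    fix r s assume "r \<in> ?R" "s \<in> ?R" "\<And>a. smul A1 r a = smul A1 s a"
    hence "smul A1 r = smul A1 s" by auto
    thus "r = s" using bij_betw_imp_inj_on[OF bij1] \<open>r \<in> ?R\<close> \<open>s \<in> ?R\<close> by (meson inj_onD)
  qed
  have gpar: "g ` evp A2 \<subseteq> evp A1 \<and> g ` odp A2 \<subseteq> odp A1"
  proof -
    have eadd: "\<And>x y. x \<in> evp A2 \<Longrightarrow> y \<in> evp A2 \<Longrightarrow> x + y \<in> evp A2"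
      and eneg: "\<And>x. x \<in> evp A2 \<Longrightarrow> - x \<in> evp A2"
      using sub2e unfolding submodule_of_def by blast+
    have oadd: "\<And>x y. x \<in> odp A2 \<Longrightarrow> y \<in> odp A2 \<Longrightarrow> x + y \<in> odp A2"
      and oneg: "\<And>x. x \<in> odp A2 \<Longrightarrow> - x \<in> odp A2"
      using sub2o unfolding submodule_of_def by blast+
    have fneg: "\<And>x. f (- x) = - f x" using fadd f0 by (metis add.right_inverse add_eq_0_iff)
    show ?thesis
    proof (intro conjI subsetI)
      fix z assume "z \<in> g ` evp A2"
      then obtain y where y: "y \<in> evp A2" "z = g y" by blast
      obtain e od where eo: "e \<in> evp A1" "od \<in> odp A1" "z = e + od" using dec1 by blast
      have "f (e + od) = y" using y(2) eo(3) fg by simp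
      hence "f e + f od = y" by (simp add: fadd)
      hence "f od = y + - f e" by (simp add: algebra_simps)
      moreover have "f e \<in> evp A2" "f od \<in> odp A2" using eo fev fod by blast+
      ultimately have "f od \<in> evp A2" using eadd[OF y(1) eneg[OF \<open>f e \<in> evp A2\<close>]] by simp
      hence "f od = 0" using \<open>f od \<in> odp A2\<close> int2 by blast
      hence "od = 0" using f0 finj by metis
      thus "z \<in> evp A1" using eo by simp
    next
      fix z assume "z \<in> g ` odp A2"
      then obtain y where y: "y \<in> odp A2" "z = g y" by blast
      obtain e od where eo: "e \<in> evp A1" "od \<in> odp A1" "z = e + od" using dec1 by blast
      have "f (e + od) = y" using y(2) eo(3) fg by simp
      hence "f e + f od = y" by (simp add: fadd)
      hence "f e = y + - f od" by (simp add: algebra_simps)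
      moreover have "f e \<in> evp A2" "f od \<in> odp A2" using eo fev fod by blast+
      ultimately have "f e \<in> odp A2" using oadd[OF y(1) oneg[OF \<open>f od \<in> odp A2\<close>]] by simp
      hence "f e = 0" using \<open>f e \<in> evp A2\<close> int2 by blast
      hence "e = 0" using f0 finj by metis
      thus "z \<in> odp A1" using eo by simp
    qed
  qed
  have stepA: "\<exists>s\<in>?R. \<forall>a. f (smul A1 s a) = smul A2 r (f a)" if r: "r \<in> ?R" for r
  proof -
    define \<chi> where "\<chi> = (\<lambda>a. g (smul A2 r (f a)))"
    have rev: "smul A2 r ` evp A2 \<subseteq> evp A2" "smul A2 r ` odp A2 \<subseteq> odp A2"
      using sub2e sub2o r unfolding submodule_of_def by blast+
    have comm: "smul A2 r (smul A2 (fls_const c) y) = smul A2 (fls_const c) (smul A2 r y)" for c y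
      using s2mul[OF r lp_const, of c y] s2mul[OF lp_const r, of c y] by (simp add: mult.commute)
    have "\<chi> \<in> Ctd_k A1"
      unfolding Ctd_k_def
    proof (intro CollectI conjI allI)
      fix a b show "\<chi> (a + b) = \<chi> a + \<chi> b" unfolding \<chi>_def by (simp add: fadd s2add[OF r] gadd)
    next
      fix c a show "\<chi> (smul A1 (fls_const c) a) = smul A1 (fls_const c) (\<chi> a)"
        unfolding \<chi>_def by (simp add: fc comm gc)
    next
      show "\<chi> ` evp A1 \<subseteq> evp A1" unfolding \<chi>_def using fev rev gpar by blast
    next
      show "\<chi> ` odp A1 \<subseteq> odp A1" unfolding \<chi>_def using fod rev gpar by blast
    next
      fix n a b show "\<chi> (nprod A1 n a b) = nprod A1 n a (\<chi> b)"
        unfolding \<chi>_def by (simp add: fnp n2[OF r, symmetric] gnp gf)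
    qed
    hence "\<chi> \<in> (\<lambda>r. smul A1 r) ` ?R" using bij_betw_imp_surj_on[OF bij1] by simp
    then obtain s where "s \<in> ?R" "\<chi> = smul A1 s" by blast
    have "f (smul A1 s a) = smul A2 r (f a)" for a
      using \<open>\<chi> = smul A1 s\<close>[symmetric] by (simp add: \<chi>_def fg)
    thus ?thesis using \<open>s \<in> ?R\<close> by blast
  qed
  have stepB: "f (smul A1 (fls_deriv s) a) = smul A2 (fls_deriv r) (f a)"
    if rs: "r \<in> ?R" "s \<in> ?R" and H: "\<And>a. f (smul A1 s a) = smul A2 r (f a)" for r s a
  proof -
    have "f (der A1 (smul A1 s a)) = smul A2 r (der A2 (f a)) + f (smul A1 (fls_deriv s) a)"
      by (simp add: d1[OF rs(2)] fadd H fder)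
    moreover have "f (der A1 (smul A1 s a)) = smul A2 r (der A2 (f a)) + smul A2 (fls_deriv r) (f a)"
      by (simp add: fder H d2[OF rs(1)])
    ultimately show ?thesis by simp
  qed
  obtain s where sR: "s \<in> ?R" and Hs: "\<And>a. f (smul A1 s a) = smul A2 fls_X (f a)"
    using stepA[OF lp_X] by blast
  have "fls_deriv s = 1"
  proof (rule sinj[OF lp_deriv[OF sR] lp_one])
    fix a show "smul A1 (fls_deriv s) a = smul A1 1 a"
    proof (rule finj)
      show "f (smul A1 (fls_deriv s) a) = f (smul A1 1 a)"
        using stepB[OF lp_X sR Hs, of a] by (simp add: s11 s21)
    qed
  qed
  hence "fls_deriv (s - fls_X) = 0" by simp
  hence "s - fls_X = fls_const ((s - fls_X) $$ 0)" by (rule deriv_zero_const)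
  hence sc: "s = fls_X + fls_const ((s - fls_X) $$ 0)" by (simp add: algebra_simps)
  obtain s2 where s2R: "s2 \<in> ?R" and Hs2: "\<And>a. f (smul A1 s2 a) = smul A2 fls_X_inv (f a)"
    using stepA[OF lp_X_inv] by blast
  have ss2: "s * s2 = 1"
  proof (rule sinj[OF lp_mult[OF sR s2R] lp_one])
    fix a
    have "f (smul A1 (s * s2) a) = smul A2 (fls_X * fls_X_inv) (f a)"
      by (simp add: s1mul[OF sR s2R] Hs Hs2 s2mul[OF lp_X lp_X_inv])
    also have "fls_X * fls_X_inv = (1 :: 'k fls)" by (simp add: fls_X_times_conv_shift)
    finally have "f (smul A1 (s * s2) a) = f (smul A1 1 a)" by (simp add: s11 s21)
    thus "smul A1 (s * s2) a = smul A1 1 a" by (rule finj)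
  qed
  have "(fls_X + fls_const ((s - fls_X) $$ 0)) * s2 = 1" using ss2 sc by simp
  hence "(s - fls_X) $$ 0 = 0" using X_plus_const_unit s2R by blast
  hence sX: "s = fls_X" using sc by simp
  hence "s2 = fls_X_inv" using ss2 X_inv_unique by blast
  define P where "P r \<longleftrightarrow> (\<forall>a. f (smul A1 r a) = smul A2 r (f a))" for r
  have PX: "P fls_X" using Hs sX unfolding P_def by simp
  have PXi: "P fls_X_inv" using Hs2 \<open>s2 = fls_X_inv\<close> unfolding P_def by simp
  have Pc: "P (fls_const c)" for c using fc unfolding P_def by simp
  have Pmul: "P (r * t)" if "r \<in> ?R" "t \<in> ?R" "P r" "P t" for r t
    using that unfolding P_def by (simp add: s1mul s2mul)
  have Padd: "P (r + t)" if "r \<in> ?R" "t \<in> ?R" "P r" "P t" for r t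
    using that unfolding P_def by (simp add: s1radd s2radd fadd)
  have Ppow: "P (x ^ k) \<and> x ^ k \<in> ?R" if "x \<in> ?R" "P x" for x k
  proof (induction k)
    case 0 show ?case using Pc[of 1] lp_one by simp
  next
    case (Suc k) thus ?case using Pmul[of x "x^k"] lp_mult[of x "x^k"] that by simp
  qed
  have Pmono: "P (mono n)" for n
    unfolding mono_def using Ppow[OF lp_X PX] Ppow[OF lp_X_inv PXi] by simp
  have Psum: "P (\<Sum>n\<in>S. fls_const (c n) * mono n) \<and> (\<Sum>n\<in>S. fls_const (c n) * mono n) \<in> ?R"
    if "finite S" for S and c :: "int \<Rightarrow> 'k"
    using that
  proof (induction S rule: finite_induct)
    case empty show ?case using Pc[of 0] lp_const[of 0] by simp
  next
    case (insert x F)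
    have m: "fls_const (c x) * mono x \<in> ?R" "P (fls_const (c x) * mono x)"
      using lp_mult[OF lp_const lp_mono] Pmul[OF lp_const lp_mono Pc Pmono] by auto
    show ?case using insert Padd[OF m(1) _ m(2)] lp_add[OF m(1)] by simp
  qed
  have Pall: "P r" if "r \<in> ?R" for r
  proof -
    have "finite {n. r $$ n \<noteq> 0}" using that unfolding laurent_polys_def by simp
    hence "P (\<Sum>n\<in>{n. r $$ n \<noteq> 0}. fls_const (r $$ n) * mono n)" using Psum[of _ "\<lambda>n. r $$ n"] by blast
    thus ?thesis using lp_repr[OF that] by simp
  qed
  have Pall': "\<forall>r\<in>?R. \<forall>a. f (smul A1 r a) = smul A2 r (f a)" using Pall unfolding P_def by blast
  have "conformal_hom ?R A1 A2 f"
    unfolding conformal_hom_def using fadd fev fod fnp fder Pall' by blast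
  thus "conformal_isomorphic ?R A1 A2" unfolding conformal_isomorphic_def conformal_iso_def using bij by blast
qed

end
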